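(* Let $\beta>0$, $k,\alpha,\epsilon>0$ be fixed, and let $N=N(n)$ be positive integers with $(3\alpha+21k/2+10+\epsilon)\log n\le N\le n^\alpha$. Let $p_n$ be a prime with $9n^{2k+2}\le p_n\le 2(2+\alpha+2k)Nn^{2k+2}\log n$. Let $J,B,C$ be standard normal random variables and set $\widetilde J=\lfloor 2^N e^{\beta J/\sqrt n}\rfloor$, $\widetilde B=\lfloor 2^N e^{B}\rfloor$, $\widetilde C=\lfloor 2^Ne^{C}\rfloor$. Then for every $A\in\{\widetilde J,\widetilde B,\widetilde C\}$, $$\max_{0\le \ell\le p_n-1}\big|\mathbb{P}(A\equiv \ell \bmod p_n)-p_n^{-1}\big|=O\big(N^{-1}n^{-5k-4}\big)$$ as $n\to\infty$.
   Context: $\log$ is base 2. The implicit constant in $O(\cdot)$ may depend on $\beta,k,\alpha,\epsilon$ but not on $n$, $N$, or the choice of $p_n$ in the stated range. *)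

theory Defs
  imports "HOL-Probability.Probability" "HOL-Computational_Algebra.Primes"
begin

definition std_normal :: "real measure" where
  "std_normal = density lborel std_normal_density"

definition residue_prob :: "real \<Rightarrow> nat \<Rightarrow> nat \<Rightarrow> nat \<Rightarrow> real" where
  "residue_prob c N p l =
     measure std_normal {x. \<lfloor>2 ^ N * exp (c * x)\<rfloor> mod int p = int l}"

end

theory Submission
  imports Defs
begin


lemma sn_prob: "prob_space std_normal"
  unfolding std_normal_def by (rule prob_space_normal_density) simp

lemma sets_sn[simp, measurable_cong]: "sets std_normal = sets borel"
  unfolding std_normal_def by simp

lemma space_sn[simp]: "space std_normal = UNIV"
  unfolding std_normal_def by simp

lemma sn_Ico:
  assumes "a \<le> b"
  shows "measure std_normal {a..<b} = (LBINT x=a..b. std_normal_density x)"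
proof -
  interpret prob_space std_normal by (rule sn_prob)
  have "measure std_normal {a..<b} = integral\<^sup>L std_normal (indicator {a..<b})"
    by (simp add: integral_indicator emeasure_eq_measure)
  also have "\<dots> = integral\<^sup>L lborel (\<lambda>x. std_normal_density x *\<^sub>R indicator {a..<b} x)"
    unfolding std_normal_def by (rule integral_density) auto
  also have "\<dots> = (LBINT x : {a..<b}. std_normal_density x)"
    by (simp add: set_lebesgue_integral_def mult.commute)
  also have "\<dots> = (LBINT x=a..b. std_normal_density x)"
    by (rule interval_integral_Ico[symmetric]) fact
  finally show ?thesis .
qed

definition Phi :: "real \<Rightarrow> real" where "Phi t = measure std_normal {..<t}"

lemma Phi_diff:
  assumes "a \<le> b" shows "Phi b - Phi a = measure std_normal {a..<b}"
proof -
  interpret prob_space std_normal by (rule sn_prob)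
  have "{a..<b} = {..<b} - {..<a}" by auto
  then have "measure std_normal {a..<b} = measure std_normal {..<b} - measure std_normal {..<a}"
    using finite_measure_Diff[of "{..<b}" "{..<a}"] assms by auto
  then show ?thesis unfolding Phi_def by simp
qed

lemma Phi_eq: "Phi t = Phi 0 + (LBINT x=(0::real)..t. std_normal_density x)"
proof (cases "0 \<le> t")
  case True then show ?thesis using Phi_diff[OF True] sn_Ico[OF True] by simp
next
  case False
  then have "t \<le> 0" by simp
  then show ?thesis using Phi_diff[OF \<open>t \<le> 0\<close>] sn_Ico[OF \<open>t \<le> 0\<close>]
    using interval_integral_endpoints_reverse[of "ereal 0" "ereal t" std_normal_density] by simp
qed

lemma Phi_deriv: "(Phi has_real_derivative std_normal_density t) (at t)"
proof -
  have cont: "continuous_on {-\<bar>t\<bar>-1..\<bar>t\<bar>+1} std_normal_density"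
    unfolding std_normal_density_def by (intro continuous_intros) auto
  have "((\<lambda>u. LBINT y=(0::real)..u. std_normal_density y) has_vector_derivative std_normal_density t)
          (at t within {-\<bar>t\<bar>-1..\<bar>t\<bar>+1})"
    by (rule interval_integral_FTC2[OF _ _ cont]) auto
  then have "((\<lambda>u. LBINT y=(0::real)..u. std_normal_density y) has_vector_derivative std_normal_density t) (at t)"
    by (subst (asm) at_within_Icc_at) auto
  then have "((\<lambda>u. Phi 0 + (LBINT y=(0::real)..u. std_normal_density y)) has_vector_derivative (0 + std_normal_density t)) (at t)"
    by (rule has_vector_derivative_add[OF has_vector_derivative_const])
  moreover have "(\<lambda>u. Phi 0 + (LBINT y=(0::real)..u. std_normal_density y)) = Phi"
    by (rule ext, rule Phi_eq[symmetric])
  ultimately show ?thesis by (simp add: has_real_derivative_iff_has_vector_derivative)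
qed


context
  fixes c :: real and N :: nat
  assumes cpos: "c > 0"
begin

definition "TT z = 2 ^ N * exp (c * z)"
definition "uu x = (ln x - real N * ln 2) / c"
definition "FF x = measure std_normal {z. TT z < x}"
definition "ff x = std_normal_density (uu x) / (c * x)"
definition "MM = exp (c^2 / 2) / (c * 2 ^ N)"

lemma TT_pos: "TT z > 0" unfolding TT_def by simp

lemma TT_less_iff: "x > 0 \<Longrightarrow> TT z < x \<longleftrightarrow> z < uu x"
proof -
  assume x: "x > 0"
  have "TT z < x \<longleftrightarrow> ln (TT z) < ln x" using x TT_pos by simp
  also have "ln (TT z) = real N * ln 2 + c * z" unfolding TT_def by (simp add: ln_mult ln_realpow)
  also have "(real N * ln 2 + c * z < ln x) \<longleftrightarrow> z < uu x"
    unfolding uu_def using cpos by (simp add: field_simps)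
  finally show ?thesis .
qed

lemma FF_eq: "x > 0 \<Longrightarrow> FF x = Phi (uu x)"
  unfolding FF_def Phi_def using TT_less_iff by (simp add: lessThan_def)

lemma FF_nonpos: "x \<le> 0 \<Longrightarrow> FF x = 0"
proof -
  assume "x \<le> 0"
  then have "{z. TT z < x} = {}" using TT_pos by (smt (verit) Collect_empty_eq)
  then show ?thesis unfolding FF_def by simp
qed

lemma uu_deriv: "x > 0 \<Longrightarrow> (uu has_real_derivative 1 / (c * x)) (at x)"
  unfolding uu_def using cpos
  by (auto intro!: derivative_eq_intros simp: field_simps)

lemma FF_deriv: "x > 0 \<Longrightarrow> (FF has_real_derivative ff x) (at x)"
proof -
  assume x: "x > 0"
  have "((\<lambda>y. Phi (uu y)) has_real_derivative std_normal_density (uu x) * (1 / (c * x))) (at x)"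
    by (rule DERIV_chain2[OF Phi_deriv uu_deriv[OF x]])
  then have "((\<lambda>y. Phi (uu y)) has_real_derivative ff x) (at x)" by (simp add: ff_def)
  then show ?thesis
    by (rule has_field_derivative_transform_within_open[where S="{0<..}"]) (use x FF_eq in auto)
qed

lemma exp_uu: "x > 0 \<Longrightarrow> exp (c * uu x) = x / 2 ^ N"
proof -
  assume x: "x > 0"
  have "c * uu x = ln x - real N * ln 2" unfolding uu_def using cpos by simp
  then have "exp (c * uu x) = exp (ln x) / exp (real N * ln 2)" by (simp add: exp_diff)
  also have "exp (real N * ln 2) = 2 ^ N" by (simp add: exp_of_nat_mult)
  finally show ?thesis using x by simp
qed

definition "qq z = - (z^2)/2 - c * z"

lemma ff_form: "x > 0 \<Longrightarrow> ff x = exp (qq (uu x)) / (sqrt (2*pi) * c * 2 ^ N)"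
proof -
  assume x: "x > 0"
  have "x = 2 ^ N * exp (c * uu x)" using exp_uu[OF x] by simp
  then have "ff x = std_normal_density (uu x) / (c * (2 ^ N * exp (c * uu x)))"
    unfolding ff_def by simp
  also have "\<dots> = exp (qq (uu x)) / (sqrt (2*pi) * c * 2 ^ N)"
  proof -
    have E: "exp (qq (uu x)) = exp (-((uu x)^2)/2) / exp (c * uu x)"
      unfolding qq_def by (simp add: exp_diff)
    show ?thesis unfolding std_normal_density_def E by (simp add: field_simps)
  qed
  finally show ?thesis .
qed

lemma qq_le: "qq z \<le> c^2/2"
proof -
  have "c^2/2 - qq z = (z + c)^2 / 2" unfolding qq_def by (simp add: power2_eq_square field_simps)
  then show ?thesis by (smt (verit) zero_le_power2 divide_nonneg_pos)
qed

lemma qq_mono1: "z1 \<le> z2 \<Longrightarrow> z2 \<le> -c \<Longrightarrow> qq z1 \<le> qq z2"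
proof -
  assume a: "z1 \<le> z2" "z2 \<le> -c"
  have "qq z2 - qq z1 = (z2 - z1) * (- (z1 + z2)/2 - c)" unfolding qq_def
    by (simp add: power2_eq_square field_simps)
  moreover have "(z2 - z1) * (- (z1 + z2)/2 - c) \<ge> 0" using a by (intro mult_nonneg_nonneg) auto
  ultimately show ?thesis by simp
qed

lemma qq_mono2: "z1 \<le> z2 \<Longrightarrow> -c \<le> z1 \<Longrightarrow> qq z2 \<le> qq z1"
proof -
  assume a: "z1 \<le> z2" "-c \<le> z1"
  have "qq z1 - qq z2 = (z2 - z1) * ((z1 + z2)/2 + c)" unfolding qq_def
    by (simp add: power2_eq_square field_simps)
  moreover have "(z2 - z1) * ((z1 + z2)/2 + c) \<ge> 0"
  proof -
    have "z2 - z1 \<ge> 0" "(z1 + z2)/2 + c \<ge> 0" using a by (simp_all add: field_simps)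
    then show ?thesis by (rule mult_nonneg_nonneg)
  qed
  ultimately show ?thesis by simp
qed

lemma uu_mono: "0 < x \<Longrightarrow> x \<le> y \<Longrightarrow> uu x \<le> uu y"
  unfolding uu_def using cpos by (simp add: divide_right_mono)

definition "x0 = 2 ^ N * exp (- (c^2))"

lemma uu_le_iff: "x > 0 \<Longrightarrow> uu x \<le> -c \<longleftrightarrow> x \<le> x0"
proof -
  assume x: "x > 0"
  have "uu x \<le> -c \<longleftrightarrow> c * uu x \<le> c * (-c)" using cpos by (rule mult_le_cancel_left_pos[symmetric])
  also have "\<dots> \<longleftrightarrow> exp (c * uu x) \<le> exp (c * -c)" by simp
  also have "\<dots> \<longleftrightarrow> x / 2^N \<le> exp (- (c^2))" using exp_uu[OF x] by (simp add: power2_eq_square)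
  also have "\<dots> \<longleftrightarrow> x \<le> x0" unfolding x0_def by (simp add: field_simps)
  finally show ?thesis .
qed

lemma ff_le_MM: "x > 0 \<Longrightarrow> ff x \<le> MM"
proof -
  assume x: "x > 0"
  have s: "sqrt (2*pi) \<ge> 1" using pi_gt3 by (simp add: real_le_rsqrt)
  have "ff x = exp (qq (uu x)) / (sqrt (2*pi) * c * 2 ^ N)" by (rule ff_form[OF x])
  also have "\<dots> \<le> exp (c^2/2) / (sqrt (2*pi) * c * 2 ^ N)"
    using cpos qq_le by (intro divide_right_mono) auto
  also have "\<dots> \<le> exp (c^2/2) / (1 * c * 2 ^ N)"
    using cpos s by (intro divide_left_mono mult_right_mono mult_pos_pos) auto
  finally show ?thesis unfolding MM_def by simp
qed

lemma ff_inc: "0 < x \<Longrightarrow> x \<le> y \<Longrightarrow> y \<le> x0 \<Longrightarrow> ff x \<le> ff y"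
proof -
  assume a: "0 < x" "x \<le> y" "y \<le> x0"
  have "qq (uu x) \<le> qq (uu y)"
    by (rule qq_mono1) (use a uu_mono uu_le_iff in auto)
  then show ?thesis using a ff_form cpos by (simp add: divide_right_mono)
qed

lemma ff_dec: "x0 \<le> x \<Longrightarrow> x \<le> y \<Longrightarrow> ff y \<le> ff x"
proof -
  assume a: "x0 \<le> x" "x \<le> y"
  have x0p: "x0 > 0" unfolding x0_def by simp
  have ux0: "uu x0 = -c" unfolding uu_def x0_def using cpos
    by (simp add: ln_mult ln_realpow power2_eq_square)
  have "-c \<le> uu x" using uu_mono[of x0 x] a x0p ux0 by simp
  then have "qq (uu y) \<le> qq (uu x)"
    by (intro qq_mono2) (use a x0p uu_mono in auto)
  then show ?thesis using a x0p ff_form cpos by (simp add: divide_right_mono)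
qed


definition "GG m = FF (real m + 1) - FF (real m)"

lemma TT_meas[measurable]: "TT \<in> borel_measurable borel"
  unfolding TT_def by (intro borel_measurable_continuous_onI continuous_intros)

lemma TT_set_meas: "{z. TT z < x} \<in> sets std_normal"
proof -
  have "{z. TT z < x} = TT -` {..<x}" by auto
  also have "\<dots> \<in> sets borel" using TT_meas by (rule measurable_sets_borel) simp
  finally show ?thesis by simp
qed


lemma F_diff_le: "0 < a \<Longrightarrow> a \<le> b \<Longrightarrow> FF b - FF a \<le> MM * (b - a)"
proof -
  assume ab: "0 < a" "a \<le> b"
  have "(\<lambda>x. FF x - MM * x) b \<le> (\<lambda>x. FF x - MM * x) a"
  proof (rule deriv_nonpos_imp_antimono[where g'="\<lambda>x. ff x - MM" and g="\<lambda>x. FF x - MM * x"])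
    fix x assume x: "x \<in> {a..b}"
    then have "x > 0" using ab by auto
    show "((\<lambda>x. FF x - MM * x) has_real_derivative ff x - MM) (at x)"
      using FF_deriv[OF \<open>x > 0\<close>] by (auto intro!: derivative_eq_intros)
    show "ff x - MM \<le> 0" using ff_le_MM[OF \<open>x > 0\<close>] by simp
  qed (use ab in auto)
  then show ?thesis by (simp add: algebra_simps)
qed

lemma GG_le_pos: "m \<ge> 1 \<Longrightarrow> GG m \<le> MM"
  unfolding GG_def using F_diff_le[of "real m" "real m + 1"] by simp

lemma F0: "FF 0 = 0" using FF_nonpos by simp

lemma F_lim: "(\<lambda>i. FF (1 / Suc i)) \<longlonglongrightarrow> 0"
proof -
  interpret prob_space std_normal by (rule sn_prob)
  define A where "A i = {z. TT z < 1 / Suc i}" for i :: nat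
  have "(\<lambda>i. measure std_normal (A i)) \<longlonglongrightarrow> measure std_normal (\<Inter>i. A i)"
  proof (rule finite_Lim_measure_decseq)
    show "range A \<subseteq> sets std_normal" unfolding A_def using TT_set_meas by blast
    show "decseq A" unfolding decseq_def
    proof (intro allI impI)
      fix m n :: nat assume "m \<le> n"
      then have "1 / real (Suc n) \<le> 1 / real (Suc m)" by (intro divide_left_mono) auto
      then show "A n \<subseteq> A m" unfolding A_def by auto
    qed
  qed
  moreover have "(\<Inter>i. A i) = {}"
  proof -
    have "\<exists>i. z \<notin> A i" for z
    proof -
      obtain n where n: "n > 0" "inverse (real n) < TT z" using ex_inverse_of_nat_less[OF TT_pos] by blast
      then obtain i where "n = Suc i" using gr0_implies_Suc by blast
      then have "inverse (real (Suc i)) < TT z" using n by simp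
      then have "\<not> TT z < 1 / real (Suc i)" by (simp add: inverse_eq_divide)
      then show ?thesis unfolding A_def by blast
    qed
    then show ?thesis by auto
  qed
  ultimately show ?thesis unfolding A_def FF_def by simp
qed

lemma GG0_le: "GG 0 \<le> MM"
proof -
  have "(\<lambda>i. FF 1 - FF (1 / Suc i)) \<longlonglongrightarrow> FF 1 - 0" by (intro tendsto_diff tendsto_const F_lim)
  moreover have "FF 1 - FF (1 / Suc i) \<le> MM" for i
  proof -
    have "FF 1 - FF (1 / Suc i) \<le> MM * (1 - 1 / Suc i)" by (rule F_diff_le) auto
    also have "\<dots> \<le> MM * 1"
      using ff_le_MM[of 1] FF_deriv cpos
      by (intro mult_left_mono) (auto simp: MM_def)
    finally show ?thesis by simp
  qed
  ultimately have "FF 1 - 0 \<le> MM" by (intro LIMSEQ_le_const2) auto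
  then show ?thesis unfolding GG_def using F0 by simp
qed

lemma GG_le: "GG m \<le> MM"
  using GG_le_pos GG0_le by (cases m) auto

lemma GG_set: "GG m = measure std_normal {z. \<lfloor>TT z\<rfloor> = int m}"
proof -
  interpret prob_space std_normal by (rule sn_prob)
  have e: "{z. \<lfloor>TT z\<rfloor> = int m} = {z. TT z < real m + 1} - {z. TT z < real m}"
    by (auto simp: floor_eq_iff)
  have sub: "{z. TT z < real m} \<subseteq> {z. TT z < real m + 1}" by auto
  have "measure std_normal {z. \<lfloor>TT z\<rfloor> = int m}
      = measure std_normal {z. TT z < real m + 1} - measure std_normal {z. TT z < real m}"
    unfolding e by (rule finite_measure_Diff[OF TT_set_meas TT_set_meas sub])
  then show ?thesis unfolding GG_def FF_def by simp
qed

lemma GG_nonneg: "GG m \<ge> 0" unfolding GG_set by simp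

lemma H_deriv: "x > 0 \<Longrightarrow> ((\<lambda>x. FF (x + 1) - FF x) has_real_derivative ff (x + 1) - ff x) (at x)"
proof -
  assume x: "x > 0"
  have d1: "(FF has_real_derivative ff (x + 1)) (at (x + 1))" using FF_deriv x by simp
  have d2: "(FF has_real_derivative ff x) (at x)" using FF_deriv x by simp
  have "((\<lambda>x. FF (x + 1)) has_real_derivative ff (x + 1) * 1) (at x)"
    by (rule DERIV_chain2[where g="\<lambda>x. x + 1", OF d1]) (auto intro!: derivative_eq_intros)
  then show ?thesis using d2 by (auto intro!: derivative_eq_intros)
qed

lemma GG_inc: "1 \<le> i \<Longrightarrow> real i + 2 \<le> x0 \<Longrightarrow> GG i \<le> GG (Suc i)"
proof -
  assume i: "1 \<le> i" "real i + 2 \<le> x0"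
  have "(\<lambda>x. FF (x + 1) - FF x) (real i) \<le> (\<lambda>x. FF (x + 1) - FF x) (real i + 1)"
  proof (rule DERIV_nonneg_imp_nondecreasing[where f="\<lambda>x. FF (x + 1) - FF x"])
    fix x assume x: "real i \<le> x" "x \<le> real i + 1"
    then have xp: "x > 0" using i by simp
    have "ff x \<le> ff (x + 1)" by (rule ff_inc) (use x xp i in auto)
    then show "\<exists>y. ((\<lambda>x. FF (x + 1) - FF x) has_real_derivative y) (at x) \<and> 0 \<le> y"
      using H_deriv[OF xp] by auto
  qed simp
  then show ?thesis unfolding GG_def by (simp add: add.commute)
qed

lemma GG_dec: "x0 \<le> real i \<Longrightarrow> GG (Suc i) \<le> GG i"
proof -
  assume i: "x0 \<le> real i"
  have x0p: "x0 > 0" unfolding x0_def by simp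
  have "(\<lambda>x. FF (x + 1) - FF x) (real i + 1) \<le> (\<lambda>x. FF (x + 1) - FF x) (real i)"
  proof (rule deriv_nonpos_imp_antimono[where g'="\<lambda>x. ff (x + 1) - ff x" and g="\<lambda>x. FF (x + 1) - FF x"])
    fix x assume x: "x \<in> {real i..real i + 1}"
    then have xp: "x > 0" using i x0p by simp
    show "((\<lambda>x. FF (x + 1) - FF x) has_real_derivative ff (x + 1) - ff x) (at x)" by (rule H_deriv[OF xp])
    have "ff (x + 1) \<le> ff x" by (rule ff_dec) (use x i in auto)
    then show "ff (x + 1) - ff x \<le> 0" by simp
  qed simp
  then show ?thesis unfolding GG_def by (simp add: add.commute)
qed

end


lemma tele_abs:
  fixes g :: "nat \<Rightarrow> real"
  assumes "a \<le> b"
  shows "\<bar>g b - g a\<bar> \<le> (\<Sum>i=a..<b. \<bar>g (Suc i) - g i\<bar>)"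
proof -
  have "g b - g a = (\<Sum>i=a..<b. g (Suc i) - g i)" using sum_Suc_diff'[OF assms, of g] by simp
  then have "\<bar>g b - g a\<bar> = \<bar>\<Sum>i=a..<b. g (Suc i) - g i\<bar>" by simp
  also have "\<dots> \<le> (\<Sum>i=a..<b. \<bar>g (Suc i) - g i\<bar>)" by (rule sum_abs)
  finally show ?thesis .
qed

lemma tele_block:
  fixes g :: "nat \<Rightarrow> real"
  assumes "s \<le> x" "x < s + p" "s \<le> y" "y < s + p"
  shows "\<bar>g x - g y\<bar> \<le> (\<Sum>i=s..<s+p. \<bar>g (Suc i) - g i\<bar>)"
proof (cases "y \<le> x")
  case True
  have "\<bar>g x - g y\<bar> \<le> (\<Sum>i=y..<x. \<bar>g (Suc i) - g i\<bar>)" by (rule tele_abs[OF True])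
  also have "\<dots> \<le> (\<Sum>i=s..<s+p. \<bar>g (Suc i) - g i\<bar>)"
    by (rule sum_mono2) (use assms in auto)
  finally show ?thesis .
next
  case False
  have "\<bar>g x - g y\<bar> = \<bar>g y - g x\<bar>" by simp
  also have "\<dots> \<le> (\<Sum>i=x..<y. \<bar>g (Suc i) - g i\<bar>)" by (rule tele_abs) (use False in auto)
  also have "\<dots> \<le> (\<Sum>i=s..<s+p. \<bar>g (Suc i) - g i\<bar>)"
    by (rule sum_mono2) (use assms in auto)
  finally show ?thesis .
qed

lemma discrete_main:
  fixes g :: "nat \<Rightarrow> real" and p l :: nat
  assumes g0: "\<And>m. 0 \<le> g m" and gs: "g sums 1"
    and tvs: "summable (\<lambda>i. \<bar>g (Suc i) - g i\<bar>)"
    and tvb: "(\<Sum>i. \<bar>g (Suc i) - g i\<bar>) \<le> V"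
    and p: "0 < p" "l < p"
  shows "(\<lambda>j. g (l + j*p)) sums (\<Sum>j. g (l + j*p))"
    and "\<bar>(\<Sum>j. g (l + j*p)) - 1 / real p\<bar> \<le> V"
proof -
  define D where "D i = \<bar>g (Suc i) - g i\<bar>" for i
  define G where "G j = (\<Sum>i = j*p..<j*p+p. g i)" for j
  define B where "B j = (\<Sum>i = j*p..<j*p+p. D i)" for j
  have G1: "G sums 1" unfolding G_def by (rule sums_group[OF gs p(1)])
  have Deq: "D = (\<lambda>i. \<bar>g (Suc i) - g i\<bar>)" by (simp add: fun_eq_iff D_def)
  have BT: "B sums (\<Sum>i. D i)" unfolding B_def by (rule sums_group[OF summable_sums p(1)]) (use tvs Deq in simp)
  have le1: "g (l + j*p) \<le> G j" for j
  proof -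
    have "g (l + j*p) = (\<Sum>i\<in>{l + j*p}. g i)" by simp
    also have "\<dots> \<le> G j" unfolding G_def by (rule sum_mono2) (use p g0 in auto)
    finally show ?thesis .
  qed
  have sumS: "summable (\<lambda>j. g (l + j*p))"
    by (rule summable_comparison_test[of _ G]) (use le1 g0 G1 sums_summable in auto)
  then show "(\<lambda>j. g (l + j*p)) sums (\<Sum>j. g (l + j*p))" by (rule summable_sums)
  define S where "S = (\<Sum>j. g (l + j*p))"
  define a where "a j = real p * g (l + j*p) - G j" for j
  have s1: "(\<lambda>j. real p * g (l + j*p)) sums (real p * S)"
    unfolding S_def by (rule sums_mult[OF summable_sums[OF sumS]])
  have asum: "a sums (real p * S - 1)"
    unfolding a_def by (rule sums_diff[OF s1 G1])
  have abound: "\<bar>a j\<bar> \<le> real p * B j" for j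
  proof -
    have "G j = (\<Sum>r=0..<p. g (r + j*p))"
      unfolding G_def using sum.shift_bounds_nat_ivl[of g 0 "j*p" p] by (simp add: add.commute)
    also have "\<dots> = (\<Sum>r<p. g (j*p + r))" by (simp add: atLeast0LessThan ac_simps)
    finally have "G j = (\<Sum>r<p. g (j*p + r))" .
    then have "a j = (\<Sum>r<p. g (l + j*p) - g (j*p + r))"
      unfolding a_def by (simp add: sum_subtractf)
    then have "\<bar>a j\<bar> \<le> (\<Sum>r<p. \<bar>g (l + j*p) - g (j*p + r)\<bar>)" by (simp add: sum_abs)
    also have "\<dots> \<le> (\<Sum>r<p. B j)"
      by (rule sum_mono) (unfold B_def D_def, rule tele_block, use p in auto)
    finally show ?thesis by simp
  qed
  have Bs: "summable B" using BT sums_summable by blast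
  have "summable (\<lambda>j. \<bar>a j\<bar>)"
    by (rule summable_comparison_test[of _ "\<lambda>j. real p * B j"]) (use abound Bs in auto)
  have "\<bar>real p * S - 1\<bar> = \<bar>suminf a\<bar>" using asum by (simp add: sums_iff)
  also have "\<dots> \<le> (\<Sum>j. \<bar>a j\<bar>)" by (rule summable_rabs) fact
  also have "\<dots> \<le> (\<Sum>j. real p * B j)"
    by (rule suminf_le) (use abound \<open>summable (\<lambda>j. \<bar>a j\<bar>)\<close> Bs in auto)
  also have "\<dots> = real p * (\<Sum>i. D i)"
  proof -
    have "suminf B = (\<Sum>i. D i)" using BT by (simp add: sums_iff)
    then show ?thesis using suminf_mult[OF Bs, of "real p"] by simp
  qed
  also have "\<dots> \<le> real p * V" using tvb p unfolding D_def by simp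
  finally have "\<bar>real p * S - 1\<bar> \<le> real p * V" .
  moreover have "\<bar>real p * S - 1\<bar> = real p * \<bar>S - 1 / real p\<bar>"
    using p by (simp add: field_simps abs_mult[symmetric])
  ultimately show "\<bar>(\<Sum>j. g (l + j*p)) - 1 / real p\<bar> \<le> V" using p unfolding S_def by simp
qed


lemma tv_partial:
  fixes g :: "nat \<Rightarrow> real" and a :: nat
  assumes g0: "\<And>m. 0 \<le> g m" and gM: "\<And>m. g m \<le> M"
    and inc: "\<And>i. 1 \<le> i \<Longrightarrow> i < a \<Longrightarrow> g i \<le> g (Suc i)"
    and dec: "\<And>i. a + 2 \<le> i \<Longrightarrow> g (Suc i) \<le> g i"
  shows "(\<Sum>i<n. \<bar>g (Suc i) - g i\<bar>) \<le> 5 * M"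
proof -
  define D where "D i = \<bar>g (Suc i) - g i\<bar>" for i
  define a' where "a' = max a 1"
  define n' where "n' = max n (a' + 2)"
  have D0: "0 \<le> D i" for i unfolding D_def by simp
  have DM: "D i \<le> M" for i unfolding D_def using g0 gM by (smt (verit))
  have "(\<Sum>i<n. D i) \<le> (\<Sum>i<n'. D i)" by (rule sum_mono2) (use D0 n'_def in auto)
  also have "(\<Sum>i<n'. D i) = (\<Sum>i=0..<a'+2. D i) + (\<Sum>i=a'+2..<n'. D i)"
    unfolding atLeast0LessThan[symmetric]
    by (rule sum.atLeastLessThan_concat[symmetric]) (auto simp: n'_def)
  also have "(\<Sum>i=0..<a'+2. D i) = (\<Sum>i=0..<1. D i) + (\<Sum>i=1..<a'+2. D i)"
    by (rule sum.atLeastLessThan_concat[symmetric]) auto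
  also have "(\<Sum>i=1..<a'+2. D i) = (\<Sum>i=1..<a'. D i) + (\<Sum>i=a'..<a'+2. D i)"
    by (rule sum.atLeastLessThan_concat[symmetric]) (auto simp: a'_def)
  also have "(\<Sum>i=0..<1. D i) \<le> M" using DM by simp
  also have "(\<Sum>i=1..<a'. D i) = (\<Sum>i=1..<a'. g (Suc i) - g i)"
    by (rule sum.cong) (use inc in \<open>auto simp: D_def a'_def\<close>)
  also have "\<dots> = g a' - g 1" by (rule sum_Suc_diff') (simp add: a'_def)
  also have "\<dots> \<le> M" using g0 gM by (smt (verit))
  also have "(\<Sum>i=a'..<a'+2. D i) \<le> (\<Sum>i=a'..<a'+2. M)" by (rule sum_mono) (rule DM)
  also have "\<dots> = 2 * M" by simp
  also have "(\<Sum>i=a'+2..<n'. D i) = - (\<Sum>i=a'+2..<n'. g (Suc i) - g i)"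
    by (simp add: sum_negf[symmetric], rule sum.cong) (use dec in \<open>auto simp: D_def a'_def\<close>)
  also have "\<dots> = g (a'+2) - g n'" by (subst sum_Suc_diff') (auto simp: n'_def)
  also have "\<dots> \<le> M" using g0 gM by (smt (verit))
  finally show ?thesis unfolding D_def by simp
qed

lemma tv_bound:
  fixes g :: "nat \<Rightarrow> real" and a :: nat
  assumes g0: "\<And>m. 0 \<le> g m" and gM: "\<And>m. g m \<le> M"
    and inc: "\<And>i. 1 \<le> i \<Longrightarrow> i < a \<Longrightarrow> g i \<le> g (Suc i)"
    and dec: "\<And>i. a + 2 \<le> i \<Longrightarrow> g (Suc i) \<le> g i"
  shows "summable (\<lambda>i. \<bar>g (Suc i) - g i\<bar>)" "(\<Sum>i. \<bar>g (Suc i) - g i\<bar>) \<le> 5 * M"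
proof -
  note tp = tv_partial[of g M a, OF g0 gM inc dec]
  show s: "summable (\<lambda>i. \<bar>g (Suc i) - g i\<bar>)"
    by (rule bounded_imp_summable[where B="5*M"], simp, subst lessThan_Suc_atMost[symmetric], rule tp)
  show "(\<Sum>i. \<bar>g (Suc i) - g i\<bar>) \<le> 5 * M" by (rule suminf_le_const[OF s tp])
qed


lemma residue_bound:
  fixes c :: real and N p l :: nat
  assumes c: "c > 0" and p: "p > 0" "l < p"
  shows "\<bar>residue_prob c N p l - 1 / real p\<bar> \<le> 5 * MM c N"
proof -
  interpret prob_space std_normal by (rule sn_prob)
  define g where "g = GG c N"
  define A where "A m = {z. \<lfloor>TT c N z\<rfloor> = int m}" for m :: nat
  have Aeq: "A m = {z. TT c N z < real m + 1} - {z. TT c N z < real m}" for m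
    unfolding A_def by (auto simp: floor_eq_iff)
  have Ameas: "A m \<in> sets std_normal" for m
    unfolding Aeq using TT_set_meas[OF c] by blast
  have gA: "g m = measure std_normal (A m)" for m unfolding g_def A_def by (rule GG_set[OF c])
  have disjA: "disjoint_family A" by (auto simp: disjoint_family_on_def A_def)
  have UA: "(\<Union>m. A m) = UNIV"
  proof -
    have "z \<in> A (nat \<lfloor>TT c N z\<rfloor>)" for z
      using TT_pos[OF c, of N z] unfolding A_def by simp
    then show ?thesis by blast
  qed
  have "(\<lambda>m. measure std_normal (A m)) sums measure std_normal (\<Union>m. A m)"
    by (rule finite_measure_UNION) (use Ameas disjA in blast)+
  then have gs: "g sums 1" unfolding gA UA using prob_space by simp
  define B where "B j = A (l + j * p)" for j
  have disjB: "disjoint_family B"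
    unfolding disjoint_family_on_def
  proof (intro ballI impI)
    fix i j :: nat assume "i \<noteq> j"
    then have "l + i * p \<noteq> l + j * p" using p by simp
    then show "B i \<inter> B j = {}" unfolding B_def A_def by auto
  qed
  have UB: "(\<Union>j. B j) = {z. \<lfloor>2 ^ N * exp (c * z)\<rfloor> mod int p = int l}"
  proof (intro set_eqI iffI)
    fix z assume "z \<in> (\<Union>j. B j)"
    then obtain j where "\<lfloor>TT c N z\<rfloor> = int l + int j * int p" unfolding B_def A_def by auto
    then show "z \<in> {z. \<lfloor>2 ^ N * exp (c * z)\<rfloor> mod int p = int l}"
      using p TT_def[OF c] by simp
  next
    fix z assume z: "z \<in> {z. \<lfloor>2 ^ N * exp (c * z)\<rfloor> mod int p = int l}"
    define k where "k = \<lfloor>TT c N z\<rfloor>"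
    have k0: "k \<ge> 0" unfolding k_def using TT_pos[OF c, of N z] by simp
    have km: "k mod int p = int l" using z unfolding k_def TT_def[OF c] by simp
    have kd: "k div int p \<ge> 0" using k0 p by (simp add: pos_imp_zdiv_nonneg_iff)
    have "k = k div int p * int p + k mod int p" by simp
    then have "k = int l + int (nat (k div int p)) * int p" using km kd by simp
    then have "z \<in> B (nat (k div int p))" unfolding B_def A_def k_def by simp
    then show "z \<in> (\<Union>j. B j)" by blast
  qed
  have "(\<lambda>j. measure std_normal (B j)) sums measure std_normal (\<Union>j. B j)"
  proof (rule finite_measure_UNION)
    show "range B \<subseteq> sets std_normal" unfolding B_def using Ameas by blast
  qed (rule disjB)
  then have rs0: "(\<lambda>j. measure std_normal (B j)) sums residue_prob c N p l"
    unfolding UB residue_prob_def .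
  have Beq: "\<And>j. measure std_normal (B j) = g (l + j * p)" unfolding B_def gA by simp
  have rs: "(\<lambda>j. g (l + j * p)) sums residue_prob c N p l" using rs0 unfolding Beq .
  define a where "a = nat \<lfloor>x0 c N\<rfloor> - 1"
  have x0p: "x0 c N > 0" using x0_def[OF c] by simp
  have inc: "g i \<le> g (Suc i)" if "1 \<le> i" "i < a" for i
  proof -
    have "i + 2 \<le> nat \<lfloor>x0 c N\<rfloor>" using that unfolding a_def by simp
    then have "real i + 2 \<le> x0 c N" by linarith
    then show ?thesis unfolding g_def using GG_inc[OF c that(1)] by simp
  qed
  have dec: "g (Suc i) \<le> g i" if "a + 2 \<le> i" for i
  proof -
    have "nat \<lfloor>x0 c N\<rfloor> + 1 \<le> i" using that unfolding a_def by simp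
    then have "x0 c N \<le> real i" using x0p by linarith
    then show ?thesis unfolding g_def by (rule GG_dec[OF c])
  qed
  have g0: "\<And>m. 0 \<le> g m" unfolding g_def using GG_nonneg[OF c] by blast
  have gM: "\<And>m. g m \<le> MM c N" unfolding g_def using GG_le[OF c] by blast
  note tv = tv_bound[of g "MM c N" a, OF g0 gM inc dec]
  note dm = discrete_main[OF g0 gs tv p]
  have "residue_prob c N p l = (\<Sum>j. g (l + j * p))" using rs dm(1) sums_unique2 by blast
  then show ?thesis using dm(2) by simp
qed


lemma growth:
  fixes n N :: nat and \<alpha> k \<epsilon> :: real
  assumes "\<alpha> > 0" "k > 0" "\<epsilon> > 0" "n \<ge> 1"
    and hN: "(3*\<alpha> + 21*k/2 + 10 + \<epsilon>) * log 2 (real n) \<le> real N"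
    and hN2: "real N \<le> real n powr \<alpha>"
  shows "sqrt (real n) * real N * real n powr (5*k+4) \<le> 2 ^ N"
proof -
  define s where "s = 3*\<alpha> + 21*k/2 + 10 + \<epsilon>"
  have n1: "real n \<ge> 1" using assms by simp
  have sq: "sqrt (real n) = real n powr (1/2)" using n1 by (simp add: powr_half_sqrt)
  have "sqrt (real n) * real N \<le> real n powr (1/2) * real n powr \<alpha>"
    unfolding sq by (rule mult_left_mono[OF hN2]) simp
  then have "sqrt (real n) * real N * real n powr (5*k+4) \<le> real n powr (1/2) * real n powr \<alpha> * real n powr (5*k+4)"
    by (rule mult_right_mono) simp
  also have "\<dots> = real n powr (1/2 + \<alpha> + (5*k+4))" by (simp only: powr_add)
  also have "\<dots> \<le> real n powr s"
  proof (rule powr_mono)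
    show "1/2 + \<alpha> + (5*k+4) \<le> s" unfolding s_def using assms by linarith
  qed (use n1 in simp)
  also have "real n powr s = 2 powr (s * log 2 (real n))"
  proof -
    have "2 powr (s * log 2 (real n)) = (2 powr (log 2 (real n))) powr s"
      by (simp add: powr_powr mult.commute)
    also have "2 powr (log 2 (real n)) = real n" using n1 by simp
    finally show ?thesis by simp
  qed
  also have "\<dots> \<le> 2 powr (real N)" by (rule powr_mono) (use hN s_def in auto)
  also have "\<dots> = 2 ^ N" by (simp add: powr_realpow)
  finally show ?thesis .
qed

theorem lemma9:
  fixes \<beta> k \<alpha> \<epsilon> :: real
  assumes "\<beta> > 0" "k > 0" "\<alpha> > 0" "\<epsilon> > 0"
  shows "\<exists>C::real. \<exists>n0::nat. \<forall>n\<ge>n0. \<forall>N::nat. \<forall>p::nat.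
           N > 0
           \<and> (3*\<alpha> + 21*k/2 + 10 + \<epsilon>) * log 2 (real n) \<le> real N
           \<and> real N \<le> real n powr \<alpha>
           \<and> prime p
           \<and> 9 * real n powr (2*k+2) \<le> real p
           \<and> real p \<le> 2 * (2 + \<alpha> + 2*k) * real N * real n powr (2*k+2) * log 2 (real n)
           \<longrightarrow> (\<forall>c \<in> {\<beta> / sqrt (real n), 1}. \<forall>l < p.
                 \<bar>residue_prob c N p l - 1 / real p\<bar>
                   \<le> C * (1 / (real N * real n powr (5*k+4))))"
proof -
  define B where "B = max \<beta> 1"
  define K where "K = 1 / \<beta> + 1"
  define E where "E = exp (B^2 / 2)"
  have Kp: "K \<ge> 1" unfolding K_def using assms by simp
  have Ep: "E > 0" unfolding E_def by simp
  show ?thesis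
  proof (intro exI[of _ "5 * E * K"] exI[of _ "1::nat"] allI impI ballI)
    fix n N p :: nat and c :: real and l :: nat
    assume n: "1 \<le> n"
    assume H: "0 < N \<and> (3*\<alpha> + 21*k/2 + 10 + \<epsilon>) * log 2 (real n) \<le> real N
           \<and> real N \<le> real n powr \<alpha> \<and> prime p
           \<and> 9 * real n powr (2*k+2) \<le> real p
           \<and> real p \<le> 2 * (2 + \<alpha> + 2*k) * real N * real n powr (2*k+2) * log 2 (real n)"
    assume cin: "c \<in> {\<beta> / sqrt (real n), 1}"
    assume lp: "l < p"
    have p0: "p > 0" using H prime_gt_0_nat by blast
    have sn: "sqrt (real n) \<ge> 1" using n by simp
    have cp: "c > 0" using cin assms sn by auto
    have cB: "c \<le> B"
    proof (cases "c = 1")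
      case True then show ?thesis unfolding B_def by simp
    next
      case False
      then have "c = \<beta> / sqrt (real n)" using cin by auto
      also have "\<dots> \<le> \<beta> / 1" by (rule divide_left_mono) (use assms sn in auto)
      finally show ?thesis unfolding B_def by simp
    qed
    have cK: "1 / c \<le> K * sqrt (real n)"
    proof (cases "c = 1")
      case True
      have "1 * 1 \<le> K * sqrt (real n)" by (rule mult_mono) (use Kp sn in auto)
      then show ?thesis using True by simp
    next
      case False
      then have "c = \<beta> / sqrt (real n)" using cin by auto
      then have "1 / c = sqrt (real n) / \<beta>" by simp
      also have "\<dots> \<le> K * sqrt (real n)"
      proof -
        have "K * sqrt (real n) = sqrt (real n) / \<beta> + sqrt (real n)" unfolding K_def
          by (simp add: algebra_simps)
        then show ?thesis using sn by linarith
      qed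
      finally show ?thesis .
    qed
    have "c^2 \<le> B^2" by (rule power_mono[OF cB]) (use cp in simp)
    then have eB: "exp (c^2 / 2) \<le> E" unfolding E_def by simp
    have g: "sqrt (real n) * real N * real n powr (5*k+4) \<le> 2 ^ N"
      by (rule growth[of \<alpha> k \<epsilon> n N]) (use assms n H in auto)
    have Npos: "real N * real n powr (5*k+4) > 0" using H n by simp
    have "\<bar>residue_prob c N p l - 1 / real p\<bar> \<le> 5 * MM c N" by (rule residue_bound[OF cp p0 lp])
    also have "MM c N = exp (c^2/2) * (1 / c) / 2 ^ N" using MM_def[OF cp] by simp
    also have "\<dots> \<le> E * (K * sqrt (real n)) / 2 ^ N"
      using eB cK cp Ep by (intro divide_right_mono mult_mono) auto
    also have "E * (K * sqrt (real n)) / 2 ^ N \<le> E * K * (1 / (real N * real n powr (5*k+4)))"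
    proof -
      define X where "X = real N * real n powr (5*k+4)"
      have Xp: "X > 0" using Npos X_def by simp
      have g': "sqrt (real n) * X \<le> 2 ^ N" using g unfolding X_def by (simp add: mult.assoc)
      have "sqrt (real n) / 2 ^ N = (sqrt (real n) * X) / (2 ^ N * X)" using Xp by simp
      also have "\<dots> \<le> 2 ^ N / (2 ^ N * X)" by (rule divide_right_mono[OF g']) (use Xp in simp)
      also have "\<dots> = 1 / X" by simp
      finally have "sqrt (real n) / 2 ^ N \<le> 1 / (real N * real n powr (5*k+4))" unfolding X_def .
      then have "E * K * (sqrt (real n) / 2 ^ N) \<le> E * K * (1 / (real N * real n powr (5*k+4)))"
        by (rule mult_left_mono) (use Ep Kp in simp)
      then show ?thesis by simp
    qed
    finally show "\<bar>residue_prob c N p l - 1 / real p\<bar> \<le> 5 * E * K * (1 / (real N * real n powr (5*k+4)))"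
      by simp
  qed
qed


end
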